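(* Let $(\mathcal E,B,\mathcal L_{\mathcal P})$ be an epistemic space with $|\mathcal P|\ge 2$, let $\mathcal S$ be a set of agents, and let $\nabla$ be an ES basic fusion operator. If $\nabla$ satisfies (ESF-SD), (ESF-P) and (ESF-I), then $\nabla$ satisfies (ESF-D).
   Context: $\mathcal L_{\mathcal P}$ is the set of propositional formulas over a finite set $\mathcal P$ of variables, $\mathcal W_{\mathcal P}$ its set of valuations (interpretations), and $[\![\phi]\!]$ the set of models of $\phi$. For a nonempty set $M$ of valuations, $\varphi_M$ denotes a formula with $[\![\varphi_M]\!]=M$ (written $\varphi_w$, $\varphi_{w,w'}$, etc.). An epistemic space is a triple $(\mathcal E,B,\mathcal L_{\mathcal P})$ with $\mathcal E$ a nonempty set (of epistemic states) and $B:\mathcal E\to\mathcal L_{\mathcal P}$ a function whose image modulo logical equivalence is exactly the set of consistent formulas modulo equivalence. Agents form a well-ordered set $(\mathcal S,<)$; a society is a nonempty finite $N\subseteq\mathcal S$; an $N$-profile is a function $\Phi:N\to\mathcal E$, with $E_i:=\Phi(i)$; for $N=\{i\}$ the profile is identified with $E_i$ (an $i$-profile). Profiles $\Phi$ on $N=\{i_1<\dots<i_n\}$ and $\Psi$ on $M=\{j_1<\dots<j_m\}$ are equivalent, $\Phi\equiv\Psi$, if $n=m$ and $\Phi(i_k)=\Psi(j_k)$ for all $k$. An ES combination operator $\nabla$ assigns to every profile $\Phi$ (of any society) and every $E\in\mathcal E$ an epistemic state $\nabla(\Phi,E)\in\mathcal E$. It is an ES basic fusion operator if for all profiles $\Phi,\Phi'$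 and $E,E',E''\in\mathcal E$: (ESF1) $B(\nabla(\Phi,E))\vdash B(E)$; (ESF2) if $\Phi\equiv\Phi'$ and $B(E)\equiv B(E')$ then $B(\nabla(\Phi,E))\equiv B(\nabla(\Phi',E'))$; (ESF3) if $B(E)\equiv B(E')\wedge B(E'')$ then $B(\nabla(\Phi,E'))\wedge B(E'')\vdash B(\nabla(\Phi,E))$; (ESF4) if $B(E)\equiv B(E')\wedge B(E'')$ and $B(\nabla(\Phi,E'))\wedge B(E'')\nvdash\bot$ then $B(\nabla(\Phi,E))\vdash B(\nabla(\Phi,E'))\wedge B(E'')$. Social postulates: (ESF-SD) for every agent $i$, every three interpretations $w,w',w''$ and every $E_{w,w'},E_{w',w''}\in\mathcal E$ with $[\![B(E_{w,w'})]\!]=\{w,w'\}$, $[\![B(E_{w',w''})]\!]=\{w',w''\}$, each of the following four pairs of conditions is realised by some $i$-profile $E_i$: (i) $B(\nabla(E_i,E_{w,w'}))\equiv\varphi_{w,w'}$ and $B(\nabla(E_i,E_{w',w''}))\equiv\varphi_{w',w''}$; (ii) $\equiv\varphi_{w,w'}$ and $\equiv\varphi_{w'}$; (iii) $\equiv\varphi_w$ and $\equiv\varphi_{w',w''}$; (iv) $\equiv\varphi_w$ and $\equiv\varphi_{w'}$. (ESF-P) for every society $N$, every $N$-profile $\Phi$ and all $E,E'$: if $\bigwedge_{i\in N}B(\nabla(E_i,E))\nvdash\bot$ and $B(\nabla(E_i,E))\wedge B(E')\vdash\bot$ for all $i\in N$, then $B(\nabla(\Phi,E))\wedge B(E')\vdash\bot$.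 (ESF-I) for every society $N$, all $N$-profiles $\Phi,\Phi'$ and every $E$: if for every $E'$ with $B(E')\vdash B(E)$ one has $B(\nabla(E_j,E'))\equiv B(\nabla(E'_j,E'))$ for all $j\in N$, then $B(\nabla(\Phi,E))\equiv B(\nabla(\Phi',E))$. (ESF-D) for every society $N$ there exists $d_N\in N$ such that for every $N$-profile $\Phi$ and every $E$, $B(\nabla(\Phi,E))\vdash B(\nabla(E_{d_N},E))$. *)

theory Defs
  imports Main "HOL-Library.FuncSet"
begin

datatype 'p form =
    Var 'p | Bot | Top | Neg "'p form" | Conj "'p form" "'p form"
  | Disj "'p form" "'p form" | Imp "'p form" "'p form"

text \<open>Valuations (interpretations) are sets of variables that are true.\<close>
type_synonym 'p valuation = "'p set"

fun sat :: "'p valuation \<Rightarrow> 'p form \<Rightarrow> bool" where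
  "sat w (Var p) = (p \<in> w)"
| "sat w Bot = False"
| "sat w Top = True"
| "sat w (Neg f) = (\<not> sat w f)"
| "sat w (Conj f g) = (sat w f \<and> sat w g)"
| "sat w (Disj f g) = (sat w f \<or> sat w g)"
| "sat w (Imp f g) = (sat w f \<longrightarrow> sat w g)"

definition models :: "'p form \<Rightarrow> 'p valuation set" where
  "models f = {w. sat w f}"

definition entails :: "'p form \<Rightarrow> 'p form \<Rightarrow> bool" where
  "entails f g \<longleftrightarrow> models f \<subseteq> models g"

definition fequiv :: "'p form \<Rightarrow> 'p form \<Rightarrow> bool" where
  "fequiv f g \<longleftrightarrow> models f = models g"

definition consistent :: "'p form \<Rightarrow> bool" where
  "consistent f \<longleftrightarrow> \<not> entails f Bot"

definition epistemic_space :: "('e \<Rightarrow> 'p form) \<Rightarrow> bool" where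
  "epistemic_space B \<longleftrightarrow>
     (\<exists>E::'e. True) \<and>
     (\<forall>E. consistent (B E)) \<and>
     (\<forall>f. consistent f \<longrightarrow> (\<exists>E. fequiv (B E) f))"

text \<open>An N-profile is a function N \<rightarrow> E, represented as an extensional function on N.\<close>

definition society :: "'ag set \<Rightarrow> bool" where
  "society N \<longleftrightarrow> N \<noteq> {} \<and> finite N"

definition profile :: "'ag set \<Rightarrow> ('ag \<Rightarrow> 'e) \<Rightarrow> bool" where
  "profile N \<Phi> \<longleftrightarrow> society N \<and> \<Phi> \<in> N \<rightarrow>\<^sub>E UNIV"

text \<open>Equivalence of profiles: same length and same states, agent by agent in increasing order.\<close>
definition prof_equiv :: "'ag::wellorder set \<Rightarrow> ('ag \<Rightarrow> 'e) \<Rightarrow> 'ag set \<Rightarrow> ('ag \<Rightarrow> 'e) \<Rightarrow> bool" where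
  "prof_equiv N \<Phi> M \<Psi> \<longleftrightarrow> map \<Phi> (sorted_list_of_set N) = map \<Psi> (sorted_list_of_set M)"

type_synonym ('ag, 'e) comb_op = "'ag set \<Rightarrow> ('ag \<Rightarrow> 'e) \<Rightarrow> 'e \<Rightarrow> 'e"

definition single :: "'ag \<Rightarrow> 'e \<Rightarrow> 'ag \<Rightarrow> 'e" where
  "single i Ei = (\<lambda>j\<in>{i}. Ei)"

definition nabla1 :: "('ag, 'e) comb_op \<Rightarrow> 'ag \<Rightarrow> 'e \<Rightarrow> 'e \<Rightarrow> 'e" where
  "nabla1 nabla i Ei E = nabla {i} (single i Ei) E"

definition ES_basic_fusion :: "('e \<Rightarrow> 'p form) \<Rightarrow> ('ag::wellorder, 'e) comb_op \<Rightarrow> bool" where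
  "ES_basic_fusion B nabla \<longleftrightarrow>
     \<comment> \<open>ESF1\<close>
     (\<forall>N \<Phi> E. profile N \<Phi> \<longrightarrow> entails (B (nabla N \<Phi> E)) (B E)) \<and>
     \<comment> \<open>ESF2\<close>
     (\<forall>N \<Phi> N' \<Phi>' E E'. profile N \<Phi> \<longrightarrow> profile N' \<Phi>' \<longrightarrow>
        prof_equiv N \<Phi> N' \<Phi>' \<longrightarrow> fequiv (B E) (B E') \<longrightarrow>
        fequiv (B (nabla N \<Phi> E)) (B (nabla N' \<Phi>' E'))) \<and>
     \<comment> \<open>ESF3\<close>
     (\<forall>N \<Phi> E E' E''. profile N \<Phi> \<longrightarrow> fequiv (B E) (Conj (B E') (B E'')) \<longrightarrow>
        entails (Conj (B (nabla N \<Phi> E')) (B E'')) (B (nabla N \<Phi> E))) \<and>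
     \<comment> \<open>ESF4\<close>
     (\<forall>N \<Phi> E E' E''. profile N \<Phi> \<longrightarrow> fequiv (B E) (Conj (B E') (B E'')) \<longrightarrow>
        \<not> entails (Conj (B (nabla N \<Phi> E')) (B E'')) Bot \<longrightarrow>
        entails (B (nabla N \<Phi> E)) (Conj (B (nabla N \<Phi> E')) (B E'')))"

definition ESF_SD :: "('e \<Rightarrow> 'p form) \<Rightarrow> ('ag, 'e) comb_op \<Rightarrow> bool" where
  "ESF_SD B nabla \<longleftrightarrow>
     (\<forall>(i::'ag) (w::'p valuation) w' w'' Eww' Ew'w''.
        w \<noteq> w' \<and> w' \<noteq> w'' \<and> w \<noteq> w'' \<longrightarrow>
        models (B Eww') = {w, w'} \<longrightarrow> models (B Ew'w'') = {w', w''} \<longrightarrow>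
        (\<exists>Ei. models (B (nabla1 nabla i Ei Eww')) = {w, w'} \<and>
              models (B (nabla1 nabla i Ei Ew'w'')) = {w', w''}) \<and>
        (\<exists>Ei. models (B (nabla1 nabla i Ei Eww')) = {w, w'} \<and>
              models (B (nabla1 nabla i Ei Ew'w'')) = {w'}) \<and>
        (\<exists>Ei. models (B (nabla1 nabla i Ei Eww')) = {w} \<and>
              models (B (nabla1 nabla i Ei Ew'w'')) = {w', w''}) \<and>
        (\<exists>Ei. models (B (nabla1 nabla i Ei Eww')) = {w} \<and>
              models (B (nabla1 nabla i Ei Ew'w'')) = {w'}))"

definition ESF_P :: "('e \<Rightarrow> 'p form) \<Rightarrow> ('ag, 'e) comb_op \<Rightarrow> bool" where
  "ESF_P B nabla \<longleftrightarrow>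
     (\<forall>N \<Phi> E E'. profile N \<Phi> \<longrightarrow>
        (\<Inter>i\<in>N. models (B (nabla1 nabla i (\<Phi> i) E))) \<noteq> {} \<longrightarrow>
        (\<forall>i\<in>N. entails (Conj (B (nabla1 nabla i (\<Phi> i) E)) (B E')) Bot) \<longrightarrow>
        entails (Conj (B (nabla N \<Phi> E)) (B E')) Bot)"

definition ESF_I :: "('e \<Rightarrow> 'p form) \<Rightarrow> ('ag, 'e) comb_op \<Rightarrow> bool" where
  "ESF_I B nabla \<longleftrightarrow>
     (\<forall>N \<Phi> \<Phi>' E. profile N \<Phi> \<longrightarrow> profile N \<Phi>' \<longrightarrow>
        (\<forall>E'. entails (B E') (B E) \<longrightarrow>
           (\<forall>j\<in>N. fequiv (B (nabla1 nabla j (\<Phi> j) E')) (B (nabla1 nabla j (\<Phi>' j) E')))) \<longrightarrow>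
        fequiv (B (nabla N \<Phi> E)) (B (nabla N \<Phi>' E)))"

definition ESF_D :: "('e \<Rightarrow> 'p form) \<Rightarrow> ('ag, 'e) comb_op \<Rightarrow> bool" where
  "ESF_D B nabla \<longleftrightarrow>
     (\<forall>N. society N \<longrightarrow> (\<exists>d\<in>N. \<forall>\<Phi> E. profile N \<Phi> \<longrightarrow>
        entails (B (nabla N \<Phi> E)) (B (nabla1 nabla d (\<Phi> d) E))))"

end

theory Submission
  imports Defs
begin

definition choice_fn :: "('w set \<Rightarrow> 'w set) \<Rightarrow> bool" where
 "choice_fn c \<longleftrightarrow> (\<forall>S. S \<noteq> {} \<longrightarrow> c S \<subseteq> S \<and> c S \<noteq> {}) \<and>
    (\<forall>S T. T \<subseteq> S \<longrightarrow> T \<noteq> {} \<longrightarrow> c S \<inter> T \<noteq> {} \<longrightarrow> c T = c S \<inter> T)"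

lemma cf_sub: assumes "choice_fn c" "S \<noteq> {}" shows "c S \<subseteq> S"
  using assms unfolding choice_fn_def by blast
lemma cf_ne: assumes "choice_fn c" "S \<noteq> {}" shows "c S \<noteq> {}"
  using assms unfolding choice_fn_def by blast
lemma cf_ax: assumes "choice_fn c" "T \<subseteq> S" "T \<noteq> {}" "c S \<inter> T \<noteq> {}" shows "c T = c S \<inter> T"
  using assms unfolding choice_fn_def by blast

lemma cf_pair: assumes "choice_fn c" shows "c {x,y} = {x} \<or> c {x,y} = {y} \<or> c {x,y} = {x,y}"
proof -
  have "c {x,y} \<subseteq> {x,y}" "c {x,y} \<noteq> {}" using cf_sub[OF assms] cf_ne[OF assms] by auto
  then show ?thesis by blast
qed

lemma cf_RP: assumes "choice_fn c" "z \<in> c {z,x}" "c {x,y} = {x}" "x \<noteq> y"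
  shows "c {z,y} = {z}"
proof -
  let ?S = "{x,y,z}"
  have s: "c ?S \<subseteq> ?S" "c ?S \<noteq> {}" using cf_sub[OF assms(1)] cf_ne[OF assms(1)] by auto
  have ny: "y \<notin> c ?S"
  proof
    assume "y \<in> c ?S"
    then have "c {x,y} = c ?S \<inter> {x,y}" by (intro cf_ax[OF assms(1)]) auto
    with \<open>y \<in> c ?S\<close> assms(3,4) show False by auto
  qed
  show ?thesis
  proof (cases "z \<in> c ?S")
    case True
    then have "c {z,y} = c ?S \<inter> {z,y}" by (intro cf_ax[OF assms(1)]) auto
    with ny True show ?thesis by auto
  next
    case False
    with s ny have cx: "c ?S = {x}" by auto
    then have "c {z,x} = c ?S \<inter> {z,x}" by (intro cf_ax[OF assms(1)]) auto
    with cx False assms(2) show ?thesis by auto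
  qed
qed

lemma cf_PR: assumes "choice_fn c" "c {x,y} = {x}" "y \<in> c {y,z}" "x \<noteq> y"
  shows "c {x,z} = {x}"
proof -
  let ?S = "{x,y,z}"
  have s: "c ?S \<subseteq> ?S" "c ?S \<noteq> {}" using cf_sub[OF assms(1)] cf_ne[OF assms(1)] by auto
  have ny: "y \<notin> c ?S"
  proof
    assume "y \<in> c ?S"
    then have "c {x,y} = c ?S \<inter> {x,y}" by (intro cf_ax[OF assms(1)]) auto
    with \<open>y \<in> c ?S\<close> assms(2,4) show False by auto
  qed
  have nz: "z \<notin> c ?S \<or> z = x"
  proof (rule ccontr)
    assume "\<not> (z \<notin> c ?S \<or> z = x)"
    then have zz: "z \<in> c ?S" "z \<noteq> x" by auto
    then have "c {y,z} = c ?S \<inter> {y,z}" by (intro cf_ax[OF assms(1)]) auto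
    with zz ny assms(3) show False by auto
  qed
  have xs: "x \<in> c ?S" using s ny nz by auto
  then have "c {x,z} = c ?S \<inter> {x,z}" by (intro cf_ax[OF assms(1)]) auto
  with xs nz show ?thesis by auto
qed

lemma cf_PP: assumes "choice_fn c" "c {x,y} = {x}" "c {y,z} = {y}" "x \<noteq> y"
  shows "c {x,z} = {x}"
  using cf_PR[OF assms(1,2) _ assms(4)] assms(3) by auto


locale arrow =
  fixes ch :: "('ag \<Rightarrow> 'e) \<Rightarrow> 'w set \<Rightarrow> 'w set"
    and ind :: "'ag \<Rightarrow> 'e \<Rightarrow> 'w set \<Rightarrow> 'w set"
    and N :: "'ag set"
    and prof :: "('ag \<Rightarrow> 'e) \<Rightarrow> bool"
  assumes ch_cf: "prof \<Phi> \<Longrightarrow> choice_fn (ch \<Phi>)"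
    and ind_cf: "choice_fn (ind i e)"
    and pareto: "prof \<Phi> \<Longrightarrow> x \<noteq> y \<Longrightarrow> (\<forall>i\<in>N. ind i (\<Phi> i) {x,y} = {x}) \<Longrightarrow> ch \<Phi> {x,y} = {x}"
    and iia: "prof \<Phi> \<Longrightarrow> prof \<Phi>' \<Longrightarrow> (\<forall>i\<in>N. ind i (\<Phi> i) {x,y} = ind i (\<Phi>' i) {x,y})
       \<Longrightarrow> ch \<Phi> {x,y} = ch \<Phi>' {x,y}"
    and sd: "a \<noteq> b \<Longrightarrow> b \<noteq> c \<Longrightarrow> a \<noteq> c \<Longrightarrow>
       (\<exists>e. ind i e {a,b} = {a,b} \<and> ind i e {b,c} = {b}) \<and>
       (\<exists>e. ind i e {a,b} = {a} \<and> ind i e {b,c} = {b,c}) \<and>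
       (\<exists>e. ind i e {a,b} = {a} \<and> ind i e {b,c} = {b})"
    and prof_mk: "prof (\<lambda>i\<in>N. f i)"
    and third: "\<exists>z. z \<noteq> x \<and> z \<noteq> y"
    and finN: "finite N" and neN: "N \<noteq> {}"
begin

definition chain :: "'ag \<Rightarrow> 'w \<Rightarrow> 'w \<Rightarrow> 'w \<Rightarrow> 'e \<Rightarrow> bool" where
  "chain i a b c e \<longleftrightarrow> ind i e {a,b} = {a} \<and> ind i e {b,c} = {b} \<and> ind i e {a,c} = {a}"

lemma chain_ex: assumes "a \<noteq> b" "b \<noteq> c" "a \<noteq> c" shows "\<exists>e. chain i a b c e"
proof -
  obtain e where e: "ind i e {a,b} = {a}" "ind i e {b,c} = {b}" using sd[OF assms, of i] by blast
  then have "ind i e {a,c} = {a}" using cf_PP[OF ind_cf e assms(1)] by blast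
  then show ?thesis using e unfolding chain_def by blast
qed

definition top :: "'ag \<Rightarrow> 'w \<Rightarrow> 'w \<Rightarrow> 'w \<Rightarrow> 'w set \<Rightarrow> 'e \<Rightarrow> bool" where
  "top i a b c V e \<longleftrightarrow> ind i e {a,b} = {a} \<and> ind i e {a,c} = {a} \<and> ind i e {b,c} = V"

lemma top_ex: assumes "a \<noteq> b" "b \<noteq> c" "a \<noteq> c" "V = {b} \<or> V = {c} \<or> V = {b,c}"
  shows "\<exists>e. top i a b c V e"
proof -
  consider "V = {b}" | "V = {c}" | "V = {b,c}" using assms(4) by blast
  then show ?thesis
  proof cases
    case 1
    obtain e where "chain i a b c e" using chain_ex[of a b c i] assms by auto
    then show ?thesis using 1 unfolding chain_def top_def by auto
  next
    case 2
    obtain e where "chain i a c b e" using chain_ex[of a c b i] assms by auto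
    then show ?thesis using 2 unfolding chain_def top_def by (auto simp: insert_commute)
  next
    case 3
    obtain e where e: "ind i e {a,b} = {a}" "ind i e {b,c} = {b,c}" using sd[of a b c i] assms by blast
    then have "ind i e {a,c} = {a}" using cf_PR[OF ind_cf e(1)] assms by auto
    then show ?thesis using e 3 unfolding top_def by auto
  qed
qed

definition bot :: "'ag \<Rightarrow> 'w \<Rightarrow> 'w \<Rightarrow> 'w \<Rightarrow> 'w set \<Rightarrow> 'e \<Rightarrow> bool" where
  "bot i a b c V e \<longleftrightarrow> ind i e {b,a} = {b} \<and> ind i e {c,a} = {c} \<and> ind i e {b,c} = V"

lemma bot_ex: assumes "a \<noteq> b" "b \<noteq> c" "a \<noteq> c" "V = {b} \<or> V = {c} \<or> V = {b,c}"
  shows "\<exists>e. bot i a b c V e"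
proof -
  consider "V = {b}" | "V = {c}" | "V = {b,c}" using assms(4) by blast
  then show ?thesis
  proof cases
    case 1
    obtain e where "chain i b c a e" using chain_ex[of b c a i] assms by auto
    then show ?thesis using 1 unfolding chain_def bot_def by auto
  next
    case 2
    obtain e where "chain i c b a e" using chain_ex[of c b a i] assms by auto
    then show ?thesis using 2 unfolding chain_def bot_def by (auto simp: insert_commute)
  next
    case 3
    have "b \<noteq> c" "c \<noteq> a" "b \<noteq> a" using assms by auto
    then obtain e where e: "ind i e {b,c} = {b,c}" "ind i e {c,a} = {c}" using sd[of b c a i] by blast
    then have "ind i e {b,a} = {b}" using cf_RP[OF ind_cf[of i e], of b c a] assms by auto
    then show ?thesis using e 3 unfolding bot_def by auto
  qed
qed

definition dec :: "'ag set \<Rightarrow> 'w \<Rightarrow> 'w \<Rightarrow> bool" where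
  "dec G x y \<longleftrightarrow> (\<forall>\<Phi>. prof \<Phi> \<longrightarrow> (\<forall>i\<in>G. ind i (\<Phi> i) {x,y} = {x}) \<longrightarrow> ch \<Phi> {x,y} = {x})"

definition wdec :: "'ag set \<Rightarrow> 'w \<Rightarrow> 'w \<Rightarrow> bool" where
  "wdec G x y \<longleftrightarrow> (\<forall>\<Phi>. prof \<Phi> \<longrightarrow> (\<forall>i\<in>G. ind i (\<Phi> i) {x,y} = {x}) \<longrightarrow>
      (\<forall>i\<in>N-G. ind i (\<Phi> i) {x,y} = {y}) \<longrightarrow> ch \<Phi> {x,y} = {x})"

lemma dec_wdec: "dec G x y \<Longrightarrow> wdec G x y"
  unfolding dec_def wdec_def by blast

lemma pair3: "ind i e {x,y} = {x} \<or> ind i e {x,y} = {y} \<or> ind i e {x,y} = {x,y}"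
  using cf_pair[OF ind_cf] by blast

lemma FA: assumes w: "wdec G x y" and d: "x \<noteq> y" "y \<noteq> z" "x \<noteq> z" and GN: "G \<subseteq> N"
  shows "dec G x z"
  unfolding dec_def
proof (intro allI impI)
  fix \<Phi> assume p: "prof \<Phi>" and g: "\<forall>i\<in>G. ind i (\<Phi> i) {x,z} = {x}"
  define \<Psi> where "\<Psi> = (\<lambda>i\<in>N. if i \<in> G then (SOME e. chain i x y z e)
      else (SOME e. top i y x z (ind i (\<Phi> i) {x,z}) e))"
  have pp: "prof \<Psi>" unfolding \<Psi>_def by (rule prof_mk)
  have G: "chain i x y z (\<Psi> i)" if "i \<in> N" "i \<in> G" for i
    using that chain_ex[OF d, of i] unfolding \<Psi>_def by (auto intro: someI_ex)
  have O: "top i y x z (ind i (\<Phi> i) {x,z}) (\<Psi> i)" if "i \<in> N" "i \<notin> G" for i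
    using that top_ex[of y x z "ind i (\<Phi> i) {x,z}" i] d pair3[of i "\<Phi> i" x z]
    unfolding \<Psi>_def by (auto intro: someI_ex)
  have a1: "\<forall>i\<in>G. ind i (\<Psi> i) {x,y} = {x}" using G GN unfolding chain_def by blast
  have a2: "\<forall>i\<in>N-G. ind i (\<Psi> i) {x,y} = {y}" using O unfolding top_def by (simp add: insert_commute)
  have "ch \<Psi> {x,y} = {x}"
    using w pp a1 a2 unfolding wdec_def by blast
  moreover have "ch \<Psi> {y,z} = {y}"
  proof (rule pareto[OF pp d(2)], intro ballI)
    fix i assume "i \<in> N" then show "ind i (\<Psi> i) {y,z} = {y}"
      using G O unfolding chain_def top_def by (cases "i \<in> G") auto
  qed
  ultimately have "ch \<Psi> {x,z} = {x}" using cf_PP[OF ch_cf[OF pp]] d by blast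
  moreover have "ch \<Phi> {x,z} = ch \<Psi> {x,z}"
  proof (rule iia[OF p pp], intro ballI)
    fix i assume "i \<in> N" then show "ind i (\<Phi> i) {x,z} = ind i (\<Psi> i) {x,z}"
      using G O g unfolding chain_def top_def by (cases "i \<in> G") auto
  qed
  ultimately show "ch \<Phi> {x,z} = {x}" by simp
qed

lemma FB: assumes w: "wdec G x y" and d: "x \<noteq> y" "y \<noteq> z" "x \<noteq> z" and GN: "G \<subseteq> N"
  shows "dec G z y"
  unfolding dec_def
proof (intro allI impI)
  fix \<Phi> assume p: "prof \<Phi>" and g: "\<forall>i\<in>G. ind i (\<Phi> i) {z,y} = {z}"
  define \<Psi> where "\<Psi> = (\<lambda>i\<in>N. if i \<in> G then (SOME e. chain i z x y e)
      else (SOME e. bot i x z y (ind i (\<Phi> i) {z,y}) e))"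
  have pp: "prof \<Psi>" unfolding \<Psi>_def by (rule prof_mk)
  have G: "chain i z x y (\<Psi> i)" if "i \<in> N" "i \<in> G" for i
    using that chain_ex[of z x y i] d unfolding \<Psi>_def by (auto intro: someI_ex)
  have O: "bot i x z y (ind i (\<Phi> i) {z,y}) (\<Psi> i)" if "i \<in> N" "i \<notin> G" for i
    using that bot_ex[of x z y "ind i (\<Phi> i) {z,y}" i] d pair3[of i "\<Phi> i" z y]
    unfolding \<Psi>_def by (auto intro: someI_ex)
  have a1: "\<forall>i\<in>G. ind i (\<Psi> i) {x,y} = {x}" using G GN unfolding chain_def by blast
  have a2: "\<forall>i\<in>N-G. ind i (\<Psi> i) {x,y} = {y}" using O unfolding bot_def by (simp add: insert_commute)
  have "ch \<Psi> {x,y} = {x}"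
    using w pp a1 a2 unfolding wdec_def by blast
  moreover have "ch \<Psi> {z,x} = {z}"
  proof (rule pareto[OF pp], use d in simp, intro ballI)
    fix i assume "i \<in> N" then show "ind i (\<Psi> i) {z,x} = {z}"
      using G O unfolding chain_def bot_def by (cases "i \<in> G") (auto simp: insert_commute)
  qed
  ultimately have "ch \<Psi> {z,y} = {z}" using cf_PP[OF ch_cf[OF pp]] d by blast
  moreover have "ch \<Phi> {z,y} = ch \<Psi> {z,y}"
  proof (rule iia[OF p pp], intro ballI)
    fix i assume "i \<in> N" then show "ind i (\<Phi> i) {z,y} = ind i (\<Psi> i) {z,y}"
      using G O g unfolding chain_def bot_def by (cases "i \<in> G") auto
  qed
  ultimately show "ch \<Phi> {z,y} = {z}" by simp
qed

lemma expand: assumes w: "wdec G x y" "x \<noteq> y" "G \<subseteq> N"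
  shows "\<forall>a b. a \<noteq> b \<longrightarrow> dec G a b"
proof -
  have X: "dec G x c" if "c \<noteq> x" for c
  proof (cases "c = y")
    case False then show ?thesis using FA[OF w(1,2) _ _ w(3)] that by auto
  next
    case True
    obtain z where z: "z \<noteq> x" "z \<noteq> y" using third by blast
    have "dec G x z" using FA[OF w(1,2) _ _ w(3)] z by auto
    then have "wdec G x z" by (rule dec_wdec)
    from FA[OF this _ _ _ w(3), of y] z w True show ?thesis by auto
  qed
  show ?thesis
  proof (intro allI impI)
    fix a b :: 'w assume ab: "a \<noteq> b"
    show "dec G a b"
    proof (cases "a = x")
      case True then show ?thesis using X ab by auto
    next
      case ax: False
      show ?thesis
      proof (cases "b = x")
        case False
        have "wdec G x b" using X False by (auto intro: dec_wdec)
        from FB[OF this _ _ _ w(3), of a] ab ax False show ?thesis by auto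
      next
        case True
        obtain c where c: "c \<noteq> a" "c \<noteq> x" using third by blast
        have "wdec G x c" using X c by (auto intro: dec_wdec)
        from FB[OF this _ _ _ w(3), of a] c ax have "dec G a c" by auto
        then have "wdec G a c" by (rule dec_wdec)
        from FA[OF this _ _ _ w(3), of x] c ax True show ?thesis by auto
      qed
    qed
  qed
qed

definition cdec :: "'ag set \<Rightarrow> bool" where
  "cdec G \<longleftrightarrow> (\<forall>a b. a \<noteq> b \<longrightarrow> dec G a b)"

lemma contract: assumes D: "cdec G" and GN: "G \<subseteq> N" and i: "i \<in> G" "G \<noteq> {i}"
  shows "cdec {i} \<or> cdec (G - {i})"
proof -
  obtain x y z :: 'w where d: "x \<noteq> y" "y \<noteq> z" "x \<noteq> z"
  proof -
    fix x :: 'w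
    obtain y where y: "y \<noteq> x" using third[of x x] by blast
    obtain z where "z \<noteq> x" "z \<noteq> y" using third[of x y] by blast
    then show thesis using that[of x y z] y by auto
  qed
  define \<Psi> where "\<Psi> = (\<lambda>j\<in>N. if j = i then (SOME e. chain j x y z e)
      else if j \<in> G then (SOME e. chain j z x y e) else (SOME e. chain j y z x e))"
  have pp: "prof \<Psi>" unfolding \<Psi>_def by (rule prof_mk)
  have I: "chain i x y z (\<Psi> i)"
    using i GN chain_ex[of x y z i] d unfolding \<Psi>_def by (auto intro: someI_ex)
  have G: "chain j z x y (\<Psi> j)" if "j \<in> G" "j \<noteq> i" for j
    using that GN chain_ex[of z x y j] d unfolding \<Psi>_def by (auto intro: someI_ex)
  have O: "chain j y z x (\<Psi> j)" if "j \<in> N" "j \<notin> G" for j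
    using that i chain_ex[of y z x j] d unfolding \<Psi>_def by (auto intro: someI_ex)
  have "\<forall>j\<in>G. ind j (\<Psi> j) {x,y} = {x}"
  proof
    fix j assume "j \<in> G" then show "ind j (\<Psi> j) {x,y} = {x}"
      using I G unfolding chain_def by (cases "j = i") auto
  qed
  then have xy: "ch \<Psi> {x,y} = {x}" using D pp d unfolding cdec_def dec_def by blast
  show ?thesis
  proof (cases "ch \<Psi> {x,z} = {x}")
    case True
    have "wdec {i} x z" unfolding wdec_def
    proof (intro allI impI)
      fix \<Phi> assume p: "prof \<Phi>" and a1: "\<forall>j\<in>{i}. ind j (\<Phi> j) {x,z} = {x}"
        and a2: "\<forall>j\<in>N-{i}. ind j (\<Phi> j) {x,z} = {z}"
      have "ch \<Phi> {x,z} = ch \<Psi> {x,z}"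
      proof (rule iia[OF p pp], intro ballI)
        fix j assume j: "j \<in> N"
        show "ind j (\<Phi> j) {x,z} = ind j (\<Psi> j) {x,z}"
        proof (cases "j = i")
          case True then show ?thesis using a1 I unfolding chain_def by auto
        next
          case False
          then have "ind j (\<Psi> j) {x,z} = {z}"
            using G[of j] O[of j] j unfolding chain_def by (cases "j \<in> G") (auto simp: insert_commute)
          then show ?thesis using a2 j False by auto
        qed
      qed
      then show "ch \<Phi> {x,z} = {x}" using True by simp
    qed
    then have "cdec {i}" using expand[of "{i}" x z] d i GN unfolding cdec_def by auto
    then show ?thesis by simp
  next
    case False
    then have "z \<in> ch \<Psi> {z,x}" using cf_pair[OF ch_cf[OF pp], of x z] by (auto simp: insert_commute)
    then have zy: "ch \<Psi> {z,y} = {z}" using cf_RP[OF ch_cf[OF pp] _ xy d(1)] by blast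
    have "wdec (G-{i}) z y" unfolding wdec_def
    proof (intro allI impI)
      fix \<Phi> assume p: "prof \<Phi>" and a1: "\<forall>j\<in>G-{i}. ind j (\<Phi> j) {z,y} = {z}"
        and a2: "\<forall>j\<in>N-(G-{i}). ind j (\<Phi> j) {z,y} = {y}"
      have "ch \<Phi> {z,y} = ch \<Psi> {z,y}"
      proof (rule iia[OF p pp], intro ballI)
        fix j assume j: "j \<in> N"
        show "ind j (\<Phi> j) {z,y} = ind j (\<Psi> j) {z,y}"
        proof (cases "j \<in> G - {i}")
          case True then show ?thesis using a1 G[of j] unfolding chain_def by (auto simp: insert_commute)
        next
          case False
          then have "ind j (\<Psi> j) {z,y} = {y}"
            using I O[of j] j unfolding chain_def by (cases "j = i") (auto simp: insert_commute)
          then show ?thesis using a2 j False by auto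
        qed
      qed
      then show "ch \<Phi> {z,y} = {z}" using zy by simp
    qed
    then have "cdec (G-{i})" using expand[of "G-{i}" z y] d i GN unfolding cdec_def by auto
    then show ?thesis by simp
  qed
qed

lemma dictator_aux: "finite G \<Longrightarrow> G \<noteq> {} \<Longrightarrow> G \<subseteq> N \<Longrightarrow> cdec G \<Longrightarrow> \<exists>d\<in>G. cdec {d}"
proof (induction "card G" arbitrary: G rule: less_induct)
  case less
  obtain i where i: "i \<in> G" using less.prems by blast
  show ?case
  proof (cases "G = {i}")
    case True then show ?thesis using less.prems i by auto
  next
    case False
    from contract[OF less.prems(4,3) i False] show ?thesis
    proof
      assume "cdec {i}" then show ?thesis using i by blast
    next
      assume c: "cdec (G - {i})"
      have "card (G - {i}) < card G" using less.prems(1) i by (rule card_Diff1_less)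
      moreover have "G - {i} \<noteq> {}" using False i by blast
      ultimately obtain d where "d \<in> G - {i}" "cdec {d}"
        using less.hyps[of "G - {i}"] less.prems c by blast
      then show ?thesis by blast
    qed
  qed
qed

lemma dictator: "\<exists>d\<in>N. \<forall>\<Phi> x y. prof \<Phi> \<longrightarrow> x \<noteq> y \<longrightarrow> ind d (\<Phi> d) {x,y} = {x} \<longrightarrow> ch \<Phi> {x,y} = {x}"
proof -
  have "cdec N" unfolding cdec_def dec_def using pareto by blast
  from dictator_aux[OF finN neN _ this] obtain d where "d \<in> N" "cdec {d}" by blast
  then show ?thesis unfolding cdec_def dec_def by blast
qed

end

definition lit :: "'p set \<Rightarrow> 'p \<Rightarrow> 'p form" where
  "lit w p = (if p \<in> w then Var p else Neg (Var p))"

definition cform :: "'p::finite set \<Rightarrow> 'p form" where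
  "cform w = foldr (\<lambda>p f. Conj (lit w p) f) (SOME xs. set xs = UNIV) Top"

lemma models_foldr_conj: "models (foldr (\<lambda>p f. Conj (lit w p) f) xs Top) = {v. \<forall>p\<in>set xs. p\<in>v \<longleftrightarrow> p\<in>w}"
  by (induction xs) (auto simp: models_def lit_def)

lemma models_cform: "models (cform (w::'p::finite set)) = {w}"
proof -
  have "\<exists>xs. set xs = (UNIV::'p set)" using finite_list[OF finite_UNIV] .
  then have s: "set (SOME xs. set xs = (UNIV::'p set)) = UNIV" by (rule someI_ex)
  show ?thesis unfolding cform_def models_foldr_conj s by auto
qed

definition sform :: "'p::finite set set \<Rightarrow> 'p form" where
  "sform S = foldr (\<lambda>w f. Disj (cform w) f) (SOME xs. set xs = S) Bot"

lemma models_foldr_disj: "models (foldr (\<lambda>w f. Disj (cform w) f) xs Bot) = set (xs :: 'p::finite set list)"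
proof (induction xs)
  case Nil then show ?case by (simp add: models_def)
next
  case (Cons a xs)
  have "models (Disj (cform a) (foldr (\<lambda>w f. Disj (cform w) f) xs Bot)) =
     models (cform a) \<union> models (foldr (\<lambda>w f. Disj (cform w) f) xs Bot)"
    by (auto simp: models_def)
  then show ?case using Cons models_cform[of a] by simp
qed

lemma models_sform: "models (sform (S::'p::finite set set)) = S"
proof -
  have "finite S" by (rule finite_subset[of _ UNIV]) auto
  then have "\<exists>xs. set xs = S" using finite_list by blast
  then have s: "set (SOME xs. set xs = S) = S" by (rule someI_ex)
  show ?thesis unfolding sform_def models_foldr_disj s ..
qed

lemma models_Conj: "models (Conj f g) = models f \<inter> models g"
  by (auto simp: models_def)
lemma models_Bot: "models Bot = {}"
  by (auto simp: models_def)

lemma es_ne: "epistemic_space B \<Longrightarrow> models (B E) \<noteq> {}"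
  unfolding epistemic_space_def consistent_def entails_def models_Bot by blast

lemma es_real: assumes "epistemic_space (B :: 'e \<Rightarrow> 'p::finite form)" "S \<noteq> {}"
  shows "\<exists>E. models (B E) = S"
proof -
  have "consistent (sform S)" unfolding consistent_def entails_def models_Bot models_sform
    using assms(2) by blast
  then obtain E where "fequiv (B E) (sform S)" using assms(1) unfolding epistemic_space_def by blast
  then show ?thesis unfolding fequiv_def models_sform by blast
qed

definition ch0 :: "('e \<Rightarrow> 'p form) \<Rightarrow> ('ag, 'e) comb_op \<Rightarrow> 'ag set \<Rightarrow> ('ag \<Rightarrow> 'e) \<Rightarrow> 'p set set \<Rightarrow> 'p set set" where
  "ch0 B nabla M \<Phi> S = models (B (nabla M \<Phi> (SOME E. models (B E) = S)))"

lemma ch0_rep: assumes es: "epistemic_space (B :: 'e \<Rightarrow> 'p::finite form)"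
  and bf: "ES_basic_fusion B nabla" and p: "profile M \<Phi>"
  shows "models (B (nabla M \<Phi> E)) = ch0 B nabla M \<Phi> (models (B E))"
proof -
  let ?E0 = "SOME E'. models (B E') = models (B E)"
  have "models (B ?E0) = models (B E)" by (rule someI_ex) blast
  then have "fequiv (B E) (B ?E0)" unfolding fequiv_def by simp
  moreover have "prof_equiv M \<Phi> M \<Phi>" unfolding prof_equiv_def by simp
  ultimately have "fequiv (B (nabla M \<Phi> E)) (B (nabla M \<Phi> ?E0))"
    using bf p unfolding ES_basic_fusion_def by blast
  then show ?thesis unfolding fequiv_def ch0_def by simp
qed

lemma ch0_cf: assumes es: "epistemic_space (B :: 'e \<Rightarrow> 'p::finite form)"
  and bf: "ES_basic_fusion B nabla" and p: "profile M \<Phi>"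
  shows "choice_fn (ch0 B nabla M \<Phi>)"
  unfolding choice_fn_def
proof (intro conjI allI impI)
  fix S :: "'p set set" assume S: "S \<noteq> {}"
  then obtain E where E: "models (B E) = S" using es_real[OF es] by blast
  have "entails (B (nabla M \<Phi> E)) (B E)" using bf p unfolding ES_basic_fusion_def by blast
  then show "ch0 B nabla M \<Phi> S \<subseteq> S" using ch0_rep[OF es bf p, of E] E unfolding entails_def by simp
  show "ch0 B nabla M \<Phi> S \<noteq> {}" using ch0_rep[OF es bf p, of E] E es_ne[OF es, of "nabla M \<Phi> E"] by simp
next
  fix S T :: "'p set set" assume TS: "T \<subseteq> S" and T: "T \<noteq> {}" and I: "ch0 B nabla M \<Phi> S \<inter> T \<noteq> {}"
  obtain ES where ES: "models (B ES) = S" using es_real[OF es] TS T by blast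
  obtain ET where ET: "models (B ET) = T" using es_real[OF es] T by blast
  have eq: "fequiv (B ET) (Conj (B ES) (B ET))" unfolding fequiv_def models_Conj ES ET using TS by blast
  have "entails (Conj (B (nabla M \<Phi> ES)) (B ET)) (B (nabla M \<Phi> ET))"
    using bf p eq unfolding ES_basic_fusion_def by blast
  then have 1: "ch0 B nabla M \<Phi> S \<inter> T \<subseteq> ch0 B nabla M \<Phi> T"
    unfolding entails_def models_Conj ch0_rep[OF es bf p] ES ET .
  have "\<not> entails (Conj (B (nabla M \<Phi> ES)) (B ET)) Bot"
    unfolding entails_def models_Conj ch0_rep[OF es bf p] ES ET models_Bot using I by blast
  then have "entails (B (nabla M \<Phi> ET)) (Conj (B (nabla M \<Phi> ES)) (B ET))"
    using bf p eq unfolding ES_basic_fusion_def by blast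
  then have 2: "ch0 B nabla M \<Phi> T \<subseteq> ch0 B nabla M \<Phi> S \<inter> T"
    unfolding entails_def models_Conj ch0_rep[OF es bf p] ES ET .
  from 1 2 show "ch0 B nabla M \<Phi> T = ch0 B nabla M \<Phi> S \<inter> T" by blast
qed

lemma prof_single: "profile {i} (single i e)"
  unfolding profile_def society_def single_def by auto

lemma nabla1_rep: assumes es: "epistemic_space (B :: 'e \<Rightarrow> 'p::finite form)"
  and bf: "ES_basic_fusion B nabla"
  shows "models (B (nabla1 nabla i e E)) = ch0 B nabla {i} (single i e) (models (B E))"
  unfolding nabla1_def by (rule ch0_rep[OF es bf prof_single])


lemma cf_single: "choice_fn c \<Longrightarrow> c {a} = {a}"
  using cf_sub[of c "{a}"] cf_ne[of c "{a}"] by blast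

lemma three_worlds: assumes "card (UNIV :: 'p set) \<ge> 2"
  shows "\<exists>z::'p set. z \<noteq> x \<and> z \<noteq> y"
proof -
  have "(UNIV :: 'p set) \<noteq> {}" by simp
  then obtain p :: 'p where True by blast
  have "card (UNIV - {p}) \<ge> 1" using assms by (simp add: card_Diff_singleton_if)
  then have "UNIV - {p} \<noteq> {}" by (metis card.empty not_one_le_zero)
  then obtain q where "q \<noteq> p" by blast
  then have "{} \<noteq> {p}" "{} \<noteq> {q}" "{p} \<noteq> {q}" by auto
  then show ?thesis by metis
qed

theorem theorem6:
  fixes B :: "'e \<Rightarrow> 'p::finite form"
    and nabla :: "('ag::wellorder, 'e) comb_op"
  assumes "epistemic_space B"
    and "card (UNIV :: 'p set) \<ge> 2"
    and "ES_basic_fusion B nabla"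
    and "ESF_SD B nabla"
    and "ESF_P B nabla"
    and "ESF_I B nabla"
  shows "ESF_D B nabla"
  unfolding ESF_D_def
proof (intro allI impI)
  note es = assms(1) and bf = assms(3)
  fix N :: "'ag set" assume soc: "society N"
  let ?ind = "\<lambda>i e. ch0 B nabla {i} (single i e)"
  have icf: "choice_fn (?ind i e)" for i e by (rule ch0_cf[OF es bf prof_single])
  interpret A: arrow "ch0 B nabla N" ?ind N "profile N"
  proof
    fix \<Phi> :: "'ag \<Rightarrow> 'e" assume "profile N \<Phi>" then show "choice_fn (ch0 B nabla N \<Phi>)" by (rule ch0_cf[OF es bf])
  next
    fix i and e :: 'e show "choice_fn (?ind i e)" by (rule icf)
  next
    fix \<Phi> :: "'ag \<Rightarrow> 'e" and x y :: "'p set"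
    assume p: "profile N \<Phi>" and xy: "x \<noteq> y" and all: "\<forall>i\<in>N. ?ind i (\<Phi> i) {x,y} = {x}"
    obtain E where E: "models (B E) = {x,y}" using es_real[OF es, of "{x,y}"] by blast
    obtain E' where E': "models (B E') = {y}" using es_real[OF es, of "{y}"] by blast
    have m: "models (B (nabla1 nabla i (\<Phi> i) E)) = {x}" if "i \<in> N" for i
      using nabla1_rep[OF es bf] all that E by simp
    have h1: "(\<Inter>i\<in>N. models (B (nabla1 nabla i (\<Phi> i) E))) \<noteq> {}"
      using m soc unfolding society_def by auto
    have h2: "\<forall>i\<in>N. entails (Conj (B (nabla1 nabla i (\<Phi> i) E)) (B E')) Bot"
      unfolding entails_def models_Conj models_Bot using m E' xy by auto
    have "entails (Conj (B (nabla N \<Phi> E)) (B E')) Bot"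
      by (rule assms(5)[unfolded ESF_P_def, rule_format, OF p h1 h2[rule_format]])
    then have "ch0 B nabla N \<Phi> {x,y} \<inter> {y} = {}"
      unfolding entails_def models_Conj models_Bot ch0_rep[OF es bf p] E E' by blast
    moreover have "ch0 B nabla N \<Phi> {x,y} \<subseteq> {x,y}" "ch0 B nabla N \<Phi> {x,y} \<noteq> {}"
      using cf_sub[OF ch0_cf[OF es bf p]] cf_ne[OF ch0_cf[OF es bf p]] by auto
    ultimately show "ch0 B nabla N \<Phi> {x,y} = {x}" by blast
  next
    fix \<Phi> \<Phi>' :: "'ag \<Rightarrow> 'e" and x y :: "'p set"
    assume p: "profile N \<Phi>" and p': "profile N \<Phi>'"
      and all: "\<forall>i\<in>N. ?ind i (\<Phi> i) {x,y} = ?ind i (\<Phi>' i) {x,y}"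
    obtain E where E: "models (B E) = {x,y}" using es_real[OF es, of "{x,y}"] by blast
    have "\<forall>E'. entails (B E') (B E) \<longrightarrow>
           (\<forall>j\<in>N. fequiv (B (nabla1 nabla j (\<Phi> j) E')) (B (nabla1 nabla j (\<Phi>' j) E')))"
    proof (intro allI impI ballI)
      fix E' j assume "entails (B E') (B E)" and j: "j \<in> N"
      then have sub: "models (B E') \<subseteq> {x,y}" unfolding entails_def E by blast
      have "models (B E') \<noteq> {}" by (rule es_ne[OF es])
      with sub consider "models (B E') = {x}" | "models (B E') = {y}" | "models (B E') = {x,y}" by blast
      then have "?ind j (\<Phi> j) (models (B E')) = ?ind j (\<Phi>' j) (models (B E'))"
        by cases (use cf_single[OF icf] all j in auto)
      then show "fequiv (B (nabla1 nabla j (\<Phi> j) E')) (B (nabla1 nabla j (\<Phi>' j) E'))"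
        unfolding fequiv_def nabla1_rep[OF es bf] .
    qed
    then have "fequiv (B (nabla N \<Phi> E)) (B (nabla N \<Phi>' E))"
      using assms(6)[unfolded ESF_I_def, rule_format, OF p p'] by blast
    then show "ch0 B nabla N \<Phi> {x,y} = ch0 B nabla N \<Phi>' {x,y}"
      unfolding fequiv_def ch0_rep[OF es bf p] ch0_rep[OF es bf p'] E .
  next
    fix a b c :: "'p set" and i :: 'ag
    assume d: "a \<noteq> b" "b \<noteq> c" "a \<noteq> c"
    obtain E1 where E1: "models (B E1) = {a,b}" using es_real[OF es, of "{a,b}"] by blast
    obtain E2 where E2: "models (B E2) = {b,c}" using es_real[OF es, of "{b,c}"] by blast
    have "(\<exists>Ei. models (B (nabla1 nabla i Ei E1)) = {a, b} \<and>
              models (B (nabla1 nabla i Ei E2)) = {b, c}) \<and>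
        (\<exists>Ei. models (B (nabla1 nabla i Ei E1)) = {a, b} \<and>
              models (B (nabla1 nabla i Ei E2)) = {b}) \<and>
        (\<exists>Ei. models (B (nabla1 nabla i Ei E1)) = {a} \<and>
              models (B (nabla1 nabla i Ei E2)) = {b, c}) \<and>
        (\<exists>Ei. models (B (nabla1 nabla i Ei E1)) = {a} \<and>
              models (B (nabla1 nabla i Ei E2)) = {b})"
      using assms(4) d E1 E2 unfolding ESF_SD_def by blast
    then show "(\<exists>e. ?ind i e {a,b} = {a,b} \<and> ?ind i e {b,c} = {b}) \<and>
       (\<exists>e. ?ind i e {a,b} = {a} \<and> ?ind i e {b,c} = {b,c}) \<and>
       (\<exists>e. ?ind i e {a,b} = {a} \<and> ?ind i e {b,c} = {b})"
      unfolding nabla1_rep[OF es bf] E1 E2 by blast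
  next
    fix f :: "'ag \<Rightarrow> 'e"
    show "profile N (\<lambda>i\<in>N. f i)" using soc unfolding profile_def by auto
  next
    fix x y :: "'p set" show "\<exists>z. z \<noteq> x \<and> z \<noteq> y" by (rule three_worlds[OF assms(2)])
  next
    show "finite N" using soc unfolding society_def by blast
  next
    show "N \<noteq> {}" using soc unfolding society_def by blast
  qed
  obtain d where dN: "d \<in> N" and dict: "\<forall>\<Phi> x y. profile N \<Phi> \<longrightarrow> x \<noteq> y \<longrightarrow>
      ?ind d (\<Phi> d) {x,y} = {x} \<longrightarrow> ch0 B nabla N \<Phi> {x,y} = {x}"
    using A.dictator by blast
  show "\<exists>d\<in>N. \<forall>\<Phi> E. profile N \<Phi> \<longrightarrow> entails (B (nabla N \<Phi> E)) (B (nabla1 nabla d (\<Phi> d) E))"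
  proof (intro bexI[OF _ dN] allI impI)
    fix \<Phi> :: "'ag \<Rightarrow> 'e" and E :: 'e assume p: "profile N \<Phi>"
    let ?S = "models (B E)"
    have Sne: "?S \<noteq> {}" by (rule es_ne[OF es])
    have cf: "choice_fn (ch0 B nabla N \<Phi>)" by (rule ch0_cf[OF es bf p])
    have "ch0 B nabla N \<Phi> ?S \<subseteq> ?ind d (\<Phi> d) ?S"
    proof
      fix w assume w: "w \<in> ch0 B nabla N \<Phi> ?S"
      show "w \<in> ?ind d (\<Phi> d) ?S"
      proof (rule ccontr)
        assume nw: "w \<notin> ?ind d (\<Phi> d) ?S"
        obtain v where v: "v \<in> ?ind d (\<Phi> d) ?S" using cf_ne[OF icf Sne] by blast
        have vS: "v \<in> ?S" using v cf_sub[OF icf Sne] by blast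
        have wS: "w \<in> ?S" using w cf_sub[OF cf Sne] by blast
        have vw: "v \<noteq> w" using v nw by blast
        have "?ind d (\<Phi> d) {v,w} = ?ind d (\<Phi> d) ?S \<inter> {v,w}"
          by (rule cf_ax[OF icf]) (use vS wS v in auto)
        then have iv: "?ind d (\<Phi> d) {v,w} = {v}" using v nw by blast
        have c1: "ch0 B nabla N \<Phi> {v,w} = {v}" using dict[rule_format, OF p vw iv] .
        have "ch0 B nabla N \<Phi> {v,w} = ch0 B nabla N \<Phi> ?S \<inter> {v,w}"
          by (rule cf_ax[OF cf]) (use vS wS w in auto)
        with c1 w vw show False by blast
      qed
    qed
    then show "entails (B (nabla N \<Phi> E)) (B (nabla1 nabla d (\<Phi> d) E))"
      unfolding entails_def ch0_rep[OF es bf p] nabla1_rep[OF es bf] .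
  qed
qed

end
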